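(* Let $\mathcal{X}$ be a set, $p\ge1$, $0<\alpha\le1$, $\kappa_1$ a positive definite kernel on $\mathcal{X}^p$ and $\kappa_2$ a positive definite kernel on $\mathcal{X}$. Let $\mathbf{x},\mathbf{x}'$ be time series in $\mathcal{X}$ of lengths $n,n'>p$, with $\mathbf{K}_1,\mathbf{K}_2,\Delta,g,f,C_{n,n'},\varphi_\kappa$ as in the context. Let $\mathbf{G}_1,\mathbf{G}_2\in\mathbf{S}_N^+$ satisfy $\mathbf{G}_1\preceq\mathbf{K}_1$ and $\mathbf{G}_2\preceq\mathbf{K}_1+\mathbf{K}_2$, and set $\varepsilon_1=\mathbf{K}_1-\mathbf{G}_1$, $\varepsilon_2=\mathbf{K}_1+\mathbf{K}_2-\mathbf{G}_2$. Then $$e^{-\varphi_\kappa(\mathbf{x},\mathbf{x}')}\le e^{-C_{n,n'}-f(\mathbf{G}_1,\mathbf{G}_2)}\le(1+\rho)\,e^{-\varphi_\kappa(\mathbf{x},\mathbf{x}')},$$ where $\rho=\exp\big((1-\alpha)\|\nabla g(\mathbf{G}_1)\|\,\|\varepsilon_1\|+\alpha\|\nabla g(\mathbf{G}_2)\|\,\|\varepsilon_2\|\big)-1$, with $\nabla g(Q)=(Q+\Delta^{-1})^{-1}$ and $\|\cdot\|$ the Frobenius norm.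
   Context: For $\mathbf{x}=(x_1,\dots,x_n)$, $\mathbf{x}_i^j=(x_i,\dots,x_j)$; $X=(\mathbf{x}_1^p,\mathbf{x}_2^{p+1},\dots,\mathbf{x}_{n-p}^{n-1})$ and $Y=(x_{p+1},\dots,x_n)$; $X',Y'$ likewise from $\mathbf{x}'$. For a tuple $\mathbf{v}=(v_1,\dots,v_m)$ and kernel $\kappa$, $\mathbf{K}^\kappa(\mathbf{v})=[\kappa(v_i,v_j)]_{i,j\le m}$; $\cdot$ is concatenation. $N=n+n'-2p$, $\mathbf{K}_1=\mathbf{K}^{\kappa_1}(X\cdot X')$, $\mathbf{K}_2=\mathbf{K}^{\kappa_2}(Y\cdot Y')$. $\Delta$ is the $N\times N$ diagonal matrix with first $n-p$ diagonal entries $\frac{1}{2(n-p)}$ and last $n'-p$ entries $\frac{1}{2(n'-p)}$. $\mathbf{S}_N^+$ is the cone of $N\times N$ symmetric positive semidefinite matrices; $A\preceq B$ means $B-A\in\mathbf{S}_N^+$. $g(Q)=\log|Q+\Delta^{-1}|$ ($|\cdot|$ the determinant), $f(Q,R)=(1-\alpha)g(Q)+\alpha g(R)$, $C_{n,n'}=(n-p)\log(2(n-p))+(n'-p)\log(2(n'-p))$, and $\varphi_\kappa(\mathbf{x},\mathbf{x}')=C_{n,n'}+f(\mathbf{K}_1,\mathbf{K}_1+\mathbf{K}_2)$. *)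

theory Defs
  imports Complex_Main "Jordan_Normal_Form.Determinant" "Jordan_Normal_Form.Gauss_Jordan_Elimination"
begin

(* positive (semi)definite kernel on a set S (ML convention: symmetric, all Gram matrices PSD) *)
definition pd_kernel :: "'b set \<Rightarrow> ('b \<Rightarrow> 'b \<Rightarrow> real) \<Rightarrow> bool" where
  "pd_kernel S \<kappa> \<longleftrightarrow> (\<forall>x\<in>S. \<forall>y\<in>S. \<kappa> x y = \<kappa> y x) \<and>
     (\<forall>xs c. set xs \<subseteq> S \<longrightarrow>
        0 \<le> (\<Sum>i<length xs. \<Sum>j<length xs. c i * c j * \<kappa> (xs ! i) (xs ! j)))"

definition psd_mat :: "nat \<Rightarrow> real mat \<Rightarrow> bool" where
  "psd_mat N A \<longleftrightarrow> A \<in> carrier_mat N N \<and> transpose_mat A = A \<and>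
     (\<forall>v \<in> carrier_vec N. 0 \<le> v \<bullet> (A *\<^sub>v v))"

definition loewner_le :: "nat \<Rightarrow> real mat \<Rightarrow> real mat \<Rightarrow> bool" where
  "loewner_le N A B \<longleftrightarrow> psd_mat N (B - A)"

definition gram :: "('b \<Rightarrow> 'b \<Rightarrow> real) \<Rightarrow> 'b list \<Rightarrow> real mat" where
  "gram \<kappa> v = mat (length v) (length v) (\<lambda>(i,j). \<kappa> (v ! i) (v ! j))"

(* X = (x_1^p, x_2^{p+1}, ..., x_{n-p}^{n-1})  (0-based: windows starting at 0..n-p-1) *)
definition windows :: "nat \<Rightarrow> 'a list \<Rightarrow> 'a list list" where
  "windows p x = map (\<lambda>i. take p (drop i x)) [0..<length x - p]"

definition targets :: "nat \<Rightarrow> 'a list \<Rightarrow> 'a list" where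
  "targets p x = drop p x"

definition Nsize :: "nat \<Rightarrow> nat \<Rightarrow> nat \<Rightarrow> nat" where
  "Nsize p n n' = n + n' - 2 * p"

definition Delta :: "nat \<Rightarrow> nat \<Rightarrow> nat \<Rightarrow> real mat" where
  "Delta p n n' = mat (Nsize p n n') (Nsize p n n')
     (\<lambda>(i,j). if i = j then (if i < n - p then 1 / (2 * real (n - p)) else 1 / (2 * real (n' - p))) else 0)"

definition Delta_inv :: "nat \<Rightarrow> nat \<Rightarrow> nat \<Rightarrow> real mat" where
  "Delta_inv p n n' = the (mat_inverse (Delta p n n'))"

definition g_fun :: "nat \<Rightarrow> nat \<Rightarrow> nat \<Rightarrow> real mat \<Rightarrow> real" where
  "g_fun p n n' Q = ln (det (Q + Delta_inv p n n'))"

definition f_fun :: "nat \<Rightarrow> nat \<Rightarrow> nat \<Rightarrow> real \<Rightarrow> real mat \<Rightarrow> real mat \<Rightarrow> real" where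
  "f_fun p n n' \<alpha> Q R = (1 - \<alpha>) * g_fun p n n' Q + \<alpha> * g_fun p n n' R"

definition C_const :: "nat \<Rightarrow> nat \<Rightarrow> nat \<Rightarrow> real" where
  "C_const p n n' = real (n - p) * ln (2 * real (n - p)) + real (n' - p) * ln (2 * real (n' - p))"

definition K1_mat :: "nat \<Rightarrow> ('a list \<Rightarrow> 'a list \<Rightarrow> real) \<Rightarrow> 'a list \<Rightarrow> 'a list \<Rightarrow> real mat" where
  "K1_mat p \<kappa>1 x x' = gram \<kappa>1 (windows p x @ windows p x')"

definition K2_mat :: "nat \<Rightarrow> ('a \<Rightarrow> 'a \<Rightarrow> real) \<Rightarrow> 'a list \<Rightarrow> 'a list \<Rightarrow> real mat" where
  "K2_mat p \<kappa>2 x x' = gram \<kappa>2 (targets p x @ targets p x')"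

definition phi_kernel :: "nat \<Rightarrow> real \<Rightarrow> ('a list \<Rightarrow> 'a list \<Rightarrow> real) \<Rightarrow> ('a \<Rightarrow> 'a \<Rightarrow> real)
    \<Rightarrow> 'a list \<Rightarrow> 'a list \<Rightarrow> real" where
  "phi_kernel p \<alpha> \<kappa>1 \<kappa>2 x x' =
     (let n = length x; n' = length x'; K1 = K1_mat p \<kappa>1 x x'; K2 = K2_mat p \<kappa>2 x x'
      in C_const p n n' + f_fun p n n' \<alpha> K1 (K1 + K2))"

definition grad_g :: "nat \<Rightarrow> nat \<Rightarrow> nat \<Rightarrow> real mat \<Rightarrow> real mat" where
  "grad_g p n n' Q = the (mat_inverse (Q + Delta_inv p n n'))"

definition frob_norm :: "real mat \<Rightarrow> real" where
  "frob_norm A = sqrt (\<Sum>i<dim_row A. \<Sum>j<dim_col A. (A $$ (i,j))\<^sup>2)"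

end

theory Submission
  imports Defs
begin

definition qf :: "nat \<Rightarrow> real mat \<Rightarrow> (nat \<Rightarrow> real) \<Rightarrow> real" where
  "qf n A v = (\<Sum>i<n. v i * (\<Sum>j<n. A $$ (i,j) * v j))"

lemma qf_vec:
  assumes "A \<in> carrier_mat n n" "v \<in> carrier_vec n"
  shows "v \<bullet> (A *\<^sub>v v) = qf n A (\<lambda>i. v $ i)"
  using assms unfolding qf_def scalar_prod_def mult_mat_vec_def
  by (auto simp: atLeast0LessThan intro!: sum.cong)

definition schur :: "real mat \<Rightarrow> nat \<Rightarrow> real mat" where
  "schur P m = mat m m (\<lambda>(i,j). P $$ (Suc i, Suc j) - P $$ (Suc i, 0) * P $$ (0, Suc j) / P $$ (0,0))"

lemma qf_schur:
  fixes m :: nat and v :: "nat \<Rightarrow> real" and P :: "real mat"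
  assumes "P $$ (0,0) \<noteq> 0"
  defines "t \<equiv> - (\<Sum>j<m. P $$ (0, Suc j) * v j) / P $$ (0,0)"
  shows "qf m (schur P m) v = qf (Suc m) P (\<lambda>i. if i = 0 then t else v (i - 1))"
proof -
  let ?c = "\<Sum>j<m. P $$ (0, Suc j) * v j"
  have "qf (Suc m) P (\<lambda>i. if i = 0 then t else v (i - 1))
     = t * (P $$ (0,0) * t + ?c) + (\<Sum>i<m. v i * (P $$ (Suc i, 0) * t + (\<Sum>j<m. P $$ (Suc i, Suc j) * v j)))"
    unfolding qf_def by (simp del: sum.lessThan_Suc add: sum.lessThan_Suc_shift algebra_simps)
  also have "t * (P $$ (0,0) * t + ?c) = 0" using assms by (simp add: t_def)
  also have "(\<Sum>i<m. v i * (P $$ (Suc i, 0) * t + (\<Sum>j<m. P $$ (Suc i, Suc j) * v j)))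
     = (\<Sum>i<m. v i * (\<Sum>j<m. (P $$ (Suc i, Suc j) - P $$ (Suc i, 0) * P $$ (0, Suc j) / P $$ (0,0)) * v j))"
  proof (rule sum.cong[OF refl])
    fix i assume "i \<in> {..<m}"
    have "(\<Sum>j<m. (P $$ (Suc i, Suc j) - P $$ (Suc i, 0) * P $$ (0, Suc j) / P $$ (0,0)) * v j)
       = (\<Sum>j<m. P $$ (Suc i, Suc j) * v j) - P $$ (Suc i, 0) / P $$ (0,0) * ?c"
      by (simp add: algebra_simps sum_subtractf sum_distrib_left sum_divide_distrib)
    moreover have "P $$ (Suc i, 0) * t = - (P $$ (Suc i, 0) / P $$ (0,0) * ?c)"
      by (simp add: t_def)
    ultimately show "v i * (P $$ (Suc i, 0) * t + (\<Sum>j<m. P $$ (Suc i, Suc j) * v j)) =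
      v i * (\<Sum>j<m. (P $$ (Suc i, Suc j) - P $$ (Suc i, 0) * P $$ (0, Suc j) / P $$ (0,0)) * v j)"
      by simp
  qed
  finally show ?thesis unfolding qf_def schur_def by simp
qed

definition elimT :: "real mat \<Rightarrow> nat \<Rightarrow> real mat" where
  "elimT P n = mat n n (\<lambda>(i,j). if i = j then 1 else if j = 0 then - P $$ (i,0) / P $$ (0,0) else 0)"

lemma elimT_carrier[simp]: "elimT P n \<in> carrier_mat n n"
  unfolding elimT_def by simp

lemma elimT_dims[simp]: "dim_row (elimT P n) = n" "dim_col (elimT P n) = n"
  unfolding elimT_def by simp_all

lemma elimT_entry: "i < n \<Longrightarrow> j < n \<Longrightarrow> elimT P n $$ (i,j) =
   (if j = i then 1 else 0) + (if j = 0 \<and> i \<noteq> 0 then - P $$ (i,0) / P $$ (0,0) else 0)"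
  unfolding elimT_def by auto

lemma elimT_left:
  assumes X: "X \<in> carrier_mat n nc" and i: "i < n" and k: "k < nc"
  shows "(elimT P n * X) $$ (i,k) = X $$ (i,k) + (if i = 0 then 0 else - P $$ (i,0) / P $$ (0,0) * X $$ (0,k))"
proof -
  have "(elimT P n * X) $$ (i,k) = (\<Sum>j<n. elimT P n $$ (i,j) * X $$ (j,k))"
    using X i k by (simp add: scalar_prod_def atLeast0LessThan mult.commute)
  also have "\<dots> = (\<Sum>j<n. (if j = i then X $$ (j,k) else 0) + (if j = 0 \<and> i \<noteq> 0 then - P $$ (i,0) / P $$ (0,0) * X $$ (j,k) else 0))"
    by (rule sum.cong, simp, subst elimT_entry, insert i, auto)
  also have "\<dots> = X $$ (i,k) + (if i = 0 then 0 else - P $$ (i,0) / P $$ (0,0) * X $$ (0,k))"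
    using i by (simp add: sum.distrib sum.delta)
  finally show ?thesis .
qed

lemma elimT_right:
  assumes X: "X \<in> carrier_mat nr n" and i: "i < nr" and k: "k < n"
  shows "(X * transpose_mat (elimT P n)) $$ (i,k) = X $$ (i,k) + (if k = 0 then 0 else - P $$ (k,0) / P $$ (0,0) * X $$ (i,0))"
proof -
  have "(X * transpose_mat (elimT P n)) $$ (i,k) = (\<Sum>j<n. X $$ (i,j) * elimT P n $$ (k,j))"
    using X i k by (simp add: scalar_prod_def atLeast0LessThan mult.commute)
  also have "\<dots> = (\<Sum>j<n. (if j = k then X $$ (i,j) else 0) + (if j = 0 \<and> k \<noteq> 0 then - P $$ (k,0) / P $$ (0,0) * X $$ (i,j) else 0))"
    by (rule sum.cong, simp, subst elimT_entry, insert k, auto)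
  also have "\<dots> = X $$ (i,k) + (if k = 0 then 0 else - P $$ (k,0) / P $$ (0,0) * X $$ (i,0))"
    using k by (simp add: sum.distrib sum.delta)
  finally show ?thesis .
qed

lemma elimT_congr:
  assumes P: "P \<in> carrier_mat (Suc m) (Suc m)" and sym: "\<And>i j. i < Suc m \<Longrightarrow> j < Suc m \<Longrightarrow> P $$ (i,j) = P $$ (j,i)"
    and p0: "P $$ (0,0) \<noteq> 0"
  shows "elimT P (Suc m) * P * transpose_mat (elimT P (Suc m)) =
    four_block_mat (mat 1 1 (\<lambda>_. P $$ (0,0))) (0\<^sub>m 1 m) (0\<^sub>m m 1) (schur P m)"
proof (rule eq_matI)
  let ?T = "elimT P (Suc m)"
  have TP: "?T * P \<in> carrier_mat (Suc m) (Suc m)" using P by (metis elimT_carrier mult_carrier_mat)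
  fix i j assume i: "i < dim_row (four_block_mat (mat 1 1 (\<lambda>_. P $$ (0,0))) (0\<^sub>m 1 m) (0\<^sub>m m 1) (schur P m))"
    and j: "j < dim_col (four_block_mat (mat 1 1 (\<lambda>_. P $$ (0,0))) (0\<^sub>m 1 m) (0\<^sub>m m 1) (schur P m))"
  from i j have i': "i < Suc m" and j': "j < Suc m" by (auto simp: schur_def)
  have "(?T * P * transpose_mat ?T) $$ (i,j) = (?T * P) $$ (i,j) + (if j = 0 then 0 else - P $$ (j,0) / P $$ (0,0) * (?T * P) $$ (i,0))"
    by (rule elimT_right[OF TP i' j'])
  also have "\<dots> = four_block_mat (mat 1 1 (\<lambda>_. P $$ (0,0))) (0\<^sub>m 1 m) (0\<^sub>m m 1) (schur P m) $$ (i,j)"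
    using i' j' p0 sym[of 0 j] sym[of i 0]
    by (auto simp: elimT_left[OF P] schur_def field_simps)
  finally show "(?T * P * transpose_mat ?T) $$ (i,j) = four_block_mat (mat 1 1 (\<lambda>_. P $$ (0,0))) (0\<^sub>m 1 m) (0\<^sub>m m 1) (schur P m) $$ (i,j)" .
qed (insert P, auto simp: schur_def)

lemma det_elimT: "det (elimT P n) = 1"
proof -
  have "det (elimT P n) = prod_list (diag_mat (elimT P n))"
    by (rule det_lower_triangular[of n], auto simp: elimT_def)
  also have "diag_mat (elimT P n) = replicate n 1"
    by (auto simp: diag_mat_def elimT_def intro!: nth_equalityI)
  finally show ?thesis by simp
qed

lemma schur_carrier[simp]: "schur P m \<in> carrier_mat m m"
  unfolding schur_def by simp

lemma schur_dims[simp]: "dim_row (schur P m) = m" "dim_col (schur P m) = m"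
  unfolding schur_def by simp_all

lemma det_schur:
  assumes P: "P \<in> carrier_mat (Suc m) (Suc m)" and sym: "\<And>i j. i < Suc m \<Longrightarrow> j < Suc m \<Longrightarrow> P $$ (i,j) = P $$ (j,i)"
    and p0: "P $$ (0,0) \<noteq> 0"
  shows "det P = P $$ (0,0) * det (schur P m)"
proof -
  let ?T = "elimT P (Suc m)"
  have "det (?T * P * transpose_mat ?T) = det (?T * P) * det (transpose_mat ?T)"
    by (rule det_mult, insert P, auto intro: mult_carrier_mat)
  also have "\<dots> = det P"
    using P det_mult[OF elimT_carrier[of P "Suc m"] P] det_transpose[OF elimT_carrier[of P "Suc m"]]
    by (simp add: det_elimT)
  finally have 1: "det (?T * P * transpose_mat ?T) = det P" .
  have "det (four_block_mat (mat 1 1 (\<lambda>_. P $$ (0,0))) (0\<^sub>m 1 m) (0\<^sub>m m 1) (schur P m))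
     = det (mat 1 1 (\<lambda>_. P $$ (0,0))) * det (schur P m)"
    by (rule det_four_block_mat_lower_left_zero_col, auto)
  also have "det (mat 1 1 (\<lambda>_. P $$ (0,0)) :: real mat) = P $$ (0,0)"
    by (subst det_single, auto)
  finally show ?thesis using 1 elimT_congr[OF P sym p0] by simp
qed

lemma qf_unit:
  assumes "i < n"
  shows "qf n S (\<lambda>j. if j = i then 1 else 0) = S $$ (i,i)"
  using assms unfolding qf_def by (simp add: if_distrib if_distribR sum.delta cong: if_cong)

lemma diag_ge_one:
  assumes "\<And>v. (\<Sum>i<n. (v i)^2) \<le> qf n S v" and "i < n"
  shows "1 \<le> S $$ (i,i)"
proof -
  have "(\<Sum>j<n. ((\<lambda>j. if j = i then 1 else 0 :: real) j)^2) = (\<Sum>j<n. if j = i then 1 else 0)"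
    by (rule sum.cong) auto
  also have "\<dots> = 1" using assms(2) by simp
  finally show ?thesis using assms(1)[of "\<lambda>j. if j = i then 1 else 0"] qf_unit[OF assms(2), of S] by simp
qed

lemma schur_sym:
  assumes sym: "\<And>i j. i < Suc m \<Longrightarrow> j < Suc m \<Longrightarrow> P $$ (i,j) = P $$ (j,i)"
  shows "i < m \<Longrightarrow> j < m \<Longrightarrow> schur P m $$ (i,j) = schur P m $$ (j,i)"
  unfolding schur_def using sym[of "Suc i" "Suc j"] sym[of "Suc i" 0] sym[of 0 "Suc j"] sym[of "Suc j" 0] sym[of 0 "Suc i"]
  by (simp add: mult.commute)

lemma det_ge_id:
  assumes "S \<in> carrier_mat n n" and "\<And>i j. i < n \<Longrightarrow> j < n \<Longrightarrow> S $$ (i,j) = S $$ (j,i)"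
    and "\<And>v. (\<Sum>i<n. (v i)^2) \<le> qf n S v"
  shows "1 \<le> det S \<and> det S \<le> (\<Prod>i<n. S $$ (i,i))"
  using assms
proof (induction n arbitrary: S)
  case 0
  then have "S = 1\<^sub>m 0" by (intro eq_matI, auto)
  then show ?case by simp
next
  case (Suc m S)
  have S: "S \<in> carrier_mat (Suc m) (Suc m)" by fact
  have s00: "1 \<le> S $$ (0,0)" by (rule diag_ge_one[OF Suc.prems(3)], simp)
  then have s0: "S $$ (0,0) \<noteq> 0" by auto
  have sym': "\<And>i j. i < m \<Longrightarrow> j < m \<Longrightarrow> schur S m $$ (i,j) = schur S m $$ (j,i)"
    by (rule schur_sym, rule Suc.prems(2))
  have cond: "(\<Sum>i<m. (v i)^2) \<le> qf m (schur S m) v" for v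
  proof -
    define t where "t = - (\<Sum>j<m. S $$ (0, Suc j) * v j) / S $$ (0,0)"
    let ?w = "\<lambda>i. if i = 0 then t else v (i - 1)"
    have "(\<Sum>i<m. (v i)^2) \<le> (\<Sum>i<Suc m. (?w i)^2)"
      by (simp del: sum.lessThan_Suc add: sum.lessThan_Suc_shift)
    also have "\<dots> \<le> qf (Suc m) S ?w" by (rule Suc.prems(3))
    also have "\<dots> = qf m (schur S m) v" unfolding t_def by (rule qf_schur[OF s0, symmetric])
    finally show ?thesis .
  qed
  from Suc.IH[OF schur_carrier sym' cond]
  have ih: "1 \<le> det (schur S m)" "det (schur S m) \<le> (\<Prod>i<m. schur S m $$ (i,i))" by auto
  have dS: "det S = S $$ (0,0) * det (schur S m)"
    by (rule det_schur[OF S Suc.prems(2) s0])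
  have "(\<Prod>i<m. schur S m $$ (i,i)) \<le> (\<Prod>i<m. S $$ (Suc i, Suc i))"
  proof (rule prod_mono)
    fix i assume i: "i \<in> {..<m}"
    have "1 \<le> schur S m $$ (i,i)" by (rule diag_ge_one[OF cond], insert i, simp)
    moreover have "schur S m $$ (i,i) \<le> S $$ (Suc i, Suc i)"
      using i s00 by (simp add: schur_def Suc.prems(2)[of "Suc i" 0])
    ultimately show "0 \<le> schur S m $$ (i,i) \<and> schur S m $$ (i,i) \<le> S $$ (Suc i, Suc i)" by simp
  qed
  then have "det S \<le> S $$ (0,0) * (\<Prod>i<m. S $$ (Suc i, Suc i))"
  proof -
    have "det (schur S m) \<le> (\<Prod>i<m. S $$ (Suc i, Suc i))" using ih(2) \<open>(\<Prod>i<m. schur S m $$ (i,i)) \<le> _\<close> by linarith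
    then show ?thesis unfolding dS using s00 by (simp add: mult_left_mono)
  qed
  also have "\<dots> = (\<Prod>i<Suc m. S $$ (i,i))"
    by (simp del: prod.lessThan_Suc add: prod.lessThan_Suc_shift)
  finally have up: "det S \<le> (\<Prod>i<Suc m. S $$ (i,i))" .
  have "1 * 1 \<le> S $$ (0,0) * det (schur S m)"
    by (rule mult_mono, insert ih s00, auto)
  then show ?case using up dS by simp
qed

lemma assoc5:
  assumes "A \<in> carrier_mat n n" "B \<in> carrier_mat n n" "C \<in> carrier_mat n n" "E \<in> carrier_mat n n" "F \<in> carrier_mat n n"
  shows "A * B * C * (E * F) = A * (B * C * E) * F"
proof -
  have ABC: "A * B * C \<in> carrier_mat n n" using assms by simp
  have "A * B * C * (E * F) = A * B * C * E * F"
    using assoc_mult_mat[OF ABC assms(4) assms(5)] by simp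
  also have "A * B * C * E = A * (B * C * E)"
    using assms by (simp add: assoc_mult_mat[of _ n n _ n _ n])
  finally show ?thesis .
qed

lemma congr_id:
  assumes "P \<in> carrier_mat n n" and "\<And>i j. i < n \<Longrightarrow> j < n \<Longrightarrow> P $$ (i,j) = P $$ (j,i)"
    and "\<And>v. (\<exists>i<n. v i \<noteq> 0) \<Longrightarrow> 0 < qf n P v"
  shows "\<exists>L \<in> carrier_mat n n. L * P * transpose_mat L = 1\<^sub>m n"
  using assms
proof (induction n arbitrary: P)
  case 0
  then show ?case by (intro bexI[of _ "1\<^sub>m 0"], auto intro!: eq_matI)
next
  case (Suc m P)
  have P: "P \<in> carrier_mat (Suc m) (Suc m)" by fact
  have p00: "0 < P $$ (0,0)"
    using Suc.prems(3)[of "\<lambda>j. if j = 0 then 1 else 0"] qf_unit[of 0 "Suc m" P] by auto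
  then have p0: "P $$ (0,0) \<noteq> 0" by auto
  have sym': "\<And>i j. i < m \<Longrightarrow> j < m \<Longrightarrow> schur P m $$ (i,j) = schur P m $$ (j,i)"
    by (rule schur_sym, rule Suc.prems(2))
  have cond: "0 < qf m (schur P m) v" if v: "\<exists>i<m. v i \<noteq> 0" for v
  proof -
    define t where "t = - (\<Sum>j<m. P $$ (0, Suc j) * v j) / P $$ (0,0)"
    let ?w = "\<lambda>i. if i = 0 then t else v (i - 1)"
    from v obtain i where "i < m" "v i \<noteq> 0" by auto
    then have "\<exists>i<Suc m. ?w i \<noteq> 0" by (intro exI[of _ "Suc i"], auto)
    then have "0 < qf (Suc m) P ?w" by (rule Suc.prems(3))
    also have "\<dots> = qf m (schur P m) v" unfolding t_def by (rule qf_schur[OF p0, symmetric])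
    finally show ?thesis .
  qed
  from Suc.IH[OF schur_carrier sym' cond] obtain L' where L': "L' \<in> carrier_mat m m"
    and L'S: "L' * schur P m * transpose_mat L' = 1\<^sub>m m" by auto
  define c where "c = 1 / sqrt (P $$ (0,0))"
  define D where "D = four_block_mat (mat 1 1 (\<lambda>_. c)) (0\<^sub>m 1 m) (0\<^sub>m m 1) L'"
  let ?T = "elimT P (Suc m)"
  let ?B = "four_block_mat (mat 1 1 (\<lambda>_. P $$ (0,0))) (0\<^sub>m 1 m) (0\<^sub>m m 1) (schur P m)"
  have D: "D \<in> carrier_mat (Suc m) (Suc m)" unfolding D_def using L' by auto
  have T: "?T \<in> carrier_mat (Suc m) (Suc m)" by simp
  have "(D * ?T) * P * transpose_mat (D * ?T) = D * (?T * P * transpose_mat ?T) * transpose_mat D"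
    using D T P by (simp add: transpose_mult[OF D T] assoc5[of _ "Suc m"])
  also have "\<dots> = D * ?B * transpose_mat D" using elimT_congr[OF P Suc.prems(2) p0] by simp
  also have "\<dots> = 1\<^sub>m (Suc m)"
  proof -
    have DT: "transpose_mat D = four_block_mat (mat 1 1 (\<lambda>_. c)) (0\<^sub>m 1 m) (0\<^sub>m m 1) (transpose_mat L')"
      unfolding D_def by (subst transpose_four_block_mat, insert L', auto intro!: eq_matI)
    have 1: "(mat 1 1 (\<lambda>_. c) * mat 1 1 (\<lambda>_. P $$ (0,0)) + 0\<^sub>m 1 1) * mat 1 1 (\<lambda>_. c) + 0\<^sub>m 1 1 = 1\<^sub>m 1"
      using p00 by (auto intro!: eq_matI simp: scalar_prod_def c_def)
    show ?thesis unfolding DT unfolding D_def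
      apply (subst mult_four_block_mat[of _ 1 1 _ m _ m])
      apply (insert L', auto)[8]
      apply (subst mult_four_block_mat[of _ 1 1 _ m _ m])
      apply (insert L', auto)[8]
      using L' L'S 1 four_block_one_mat[of 1 m] by (simp add: carrier_matD)
  qed
  finally show ?case using D T by (intro bexI[of _ "D * ?T"], auto)
qed

lemma cauchy_schwarz_sum:
  fixes a b :: "'i \<Rightarrow> real"
  assumes "finite I"
  shows "(\<Sum>k\<in>I. a k * b k) \<le> sqrt (\<Sum>k\<in>I. (a k)^2) * sqrt (\<Sum>k\<in>I. (b k)^2)"
proof -
  define A where "A = (\<Sum>k\<in>I. (a k)^2)"
  define B where "B = (\<Sum>k\<in>I. (b k)^2)"
  define S where "S = (\<Sum>k\<in>I. a k * b k)"
  have A0: "0 \<le> A" "0 \<le> B" unfolding A_def B_def by (auto intro: sum_nonneg)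
  have "S^2 \<le> A * B"
  proof (cases "A = 0")
    case True
    then have "\<forall>k\<in>I. (a k)^2 = 0" unfolding A_def using assms by (subst (asm) sum_nonneg_eq_0_iff) auto
    then have "S = 0" unfolding S_def by simp
    then show ?thesis using A0 by simp
  next
    case False
    then have Ap: "0 < A" using A0 by auto
    have "0 \<le> (\<Sum>k\<in>I. (A * b k - S * a k)^2)" by (auto intro: sum_nonneg)
    also have "\<dots> = (\<Sum>k\<in>I. A^2 * (b k)^2 - 2*A*S*(a k * b k) + S^2*(a k)^2)"
      by (rule sum.cong, simp, simp add: power2_eq_square algebra_simps)
    also have "\<dots> = A^2 * B - 2 * A * S * S + S^2 * A"
      by (simp only: sum.distrib sum_subtractf sum_distrib_left[symmetric], simp add: A_def B_def S_def)
    also have "\<dots> = A * (A * B - S^2)" by (simp add: algebra_simps power2_eq_square)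
    finally have "0 \<le> A * B - S^2" using Ap by (simp add: zero_le_mult_iff)
    then show ?thesis by simp
  qed
  then have "S \<le> sqrt (A * B)" using real_le_rsqrt by (metis abs_le_D1 real_sqrt_abs real_sqrt_le_mono)
  then show ?thesis unfolding S_def A_def B_def by (simp add: real_sqrt_mult)
qed

lemma qf_cong: "(\<And>i. i < n \<Longrightarrow> u i = v i) \<Longrightarrow> qf n A u = qf n A v"
  unfolding qf_def by (intro sum.cong refl, auto)

lemma qf_vec_fun:
  assumes "A \<in> carrier_mat n n"
  shows "qf n A v = vec n v \<bullet> (A *\<^sub>v vec n v)"
  by (subst qf_vec[OF assms], simp, rule qf_cong, simp)

lemma trace_congr:
  fixes L E :: "real mat"
  assumes L: "L \<in> carrier_mat n n" and E: "E \<in> carrier_mat n n"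
  shows "(\<Sum>i<n. (L * E * transpose_mat L) $$ (i,i)) = (\<Sum>j<n. \<Sum>l<n. (transpose_mat L * L) $$ (j,l) * E $$ (j,l))"
proof -
  have "(\<Sum>i<n. (L * E * transpose_mat L) $$ (i,i)) = (\<Sum>i<n. \<Sum>j<n. \<Sum>l<n. L $$ (i,j) * E $$ (j,l) * L $$ (i,l))"
    using L E by (intro sum.cong refl, auto simp: scalar_prod_def atLeast0LessThan sum_distrib_left mult.assoc)
  also have "\<dots> = (\<Sum>j<n. \<Sum>i<n. \<Sum>l<n. L $$ (i,j) * E $$ (j,l) * L $$ (i,l))"
    by (rule sum.swap)
  also have "\<dots> = (\<Sum>j<n. \<Sum>l<n. \<Sum>i<n. L $$ (i,j) * E $$ (j,l) * L $$ (i,l))"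
    by (rule sum.cong, simp, rule sum.swap)
  also have "\<dots> = (\<Sum>j<n. \<Sum>l<n. (transpose_mat L * L) $$ (j,l) * E $$ (j,l))"
    using L E by (intro sum.cong refl, auto simp: scalar_prod_def atLeast0LessThan sum_distrib_right sum_distrib_left mult.commute mult.left_commute)
  finally show ?thesis .
qed

lemma frob_CS:
  fixes B E :: "real mat"
  assumes "B \<in> carrier_mat n n" "E \<in> carrier_mat n n"
  shows "(\<Sum>j<n. \<Sum>l<n. B $$ (j,l) * E $$ (j,l)) \<le> frob_norm B * frob_norm E"
proof -
  have "(\<Sum>j<n. \<Sum>l<n. B $$ (j,l) * E $$ (j,l)) = (\<Sum>(j,l)\<in>{..<n}\<times>{..<n}. B $$ (j,l) * E $$ (j,l))"
    by (rule sum.cartesian_product)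
  also have "\<dots> = (\<Sum>k\<in>{..<n}\<times>{..<n}. B $$ k * E $$ k)" by (simp add: case_prod_beta')
  also have "\<dots> \<le> sqrt (\<Sum>k\<in>{..<n}\<times>{..<n}. (B $$ k)^2) * sqrt (\<Sum>k\<in>{..<n}\<times>{..<n}. (E $$ k)^2)"
    by (rule cauchy_schwarz_sum, simp)
  also have "\<dots> = frob_norm B * frob_norm E"
    using assms unfolding frob_norm_def by (simp add: sum.cartesian_product case_prod_beta')
  finally show ?thesis .
qed

lemma core:
  fixes P E :: "real mat"
  assumes P: "P \<in> carrier_mat n n" and Ps: "transpose_mat P = P"
    and Ppd: "\<And>v. v \<in> carrier_vec n \<Longrightarrow> v \<noteq> 0\<^sub>v n \<Longrightarrow> 0 < v \<bullet> (P *\<^sub>v v)"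
    and E: "E \<in> carrier_mat n n" and Es: "transpose_mat E = E"
    and Epsd: "\<And>v. v \<in> carrier_vec n \<Longrightarrow> 0 \<le> v \<bullet> (E *\<^sub>v v)"
  shows "0 < det P \<and> det P \<le> det (P + E) \<and>
    ln (det (P + E)) - ln (det P) \<le> frob_norm (the (mat_inverse P)) * frob_norm E"
proof -
  have symP: "P $$ (i,j) = P $$ (j,i)" if "i < n" "j < n" for i j
    using arg_cong[OF Ps, of "\<lambda>M. M $$ (i,j)"] that P by auto
  have pdq: "0 < qf n P v" if "\<exists>i<n. v i \<noteq> 0" for v
  proof -
    from that obtain i where i: "i < n" "v i \<noteq> 0" by auto
    have "vec n v \<noteq> 0\<^sub>v n" using i by (metis index_vec index_zero_vec(1))
    then show ?thesis using Ppd[of "vec n v"] qf_vec_fun[OF P, of v] by simp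
  qed
  obtain L where L: "L \<in> carrier_mat n n" and LP: "L * P * transpose_mat L = 1\<^sub>m n"
    using congr_id[OF P symP pdq] by auto
  have LT: "transpose_mat L \<in> carrier_mat n n" using L by simp
  have "det (L * P * transpose_mat L) = det L * det P * det L"
    using L P by (simp add: det_mult[of _ n] det_transpose)
  then have dLP: "det L * det P * det L = 1" using LP by simp
  then have dL: "det L \<noteq> 0" by auto
  have dL2: "0 < det L * det L" using dL by (metis not_real_square_gt_zero)
  have detP: "det P = 1 / (det L * det L)" using dLP dL by (simp add: field_simps)
  then have detPpos: "0 < det P" using dL2 by simp
  define M where "M = L * E * transpose_mat L"
  have M: "M \<in> carrier_mat n n" unfolding M_def using L E by simp
  define S where "S = L * (P + E) * transpose_mat L"
  have PE: "P + E \<in> carrier_mat n n" using P E by simp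
  have S: "S \<in> carrier_mat n n" unfolding S_def using L LT PE by (meson mult_carrier_mat)
  have SM: "S = 1\<^sub>m n + M"
    unfolding S_def M_def using L P E LP
    by (simp add: mult_add_distrib_mat[of _ n n] add_mult_distrib_mat[of _ n n])
  have Mt: "transpose_mat M = M"
  proof -
    have "transpose_mat (L * E * transpose_mat L) = transpose_mat (transpose_mat L) * transpose_mat (L * E)"
      by (rule transpose_mult[of _ n n], insert L E, auto)
    also have "\<dots> = L * (transpose_mat E * transpose_mat L)"
      using L E by (simp add: transpose_mult[of _ n n])
    also have "\<dots> = L * E * transpose_mat L" using L E Es by (simp add: assoc_mult_mat[of _ n n])
    finally show ?thesis unfolding M_def .
  qed
  have symS: "S $$ (i,j) = S $$ (j,i)" if "i < n" "j < n" for i j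
    using arg_cong[OF Mt, of "\<lambda>X. X $$ (i,j)"] that M unfolding SM by auto
  have condS: "(\<Sum>i<n. (v i)^2) \<le> qf n S v" for v
  proof -
    define x where "x = vec n v"
    have x: "x \<in> carrier_vec n" unfolding x_def by simp
    have "qf n S v = x \<bullet> (S *\<^sub>v x)" unfolding x_def by (rule qf_vec_fun[OF S])
    also have "\<dots> = x \<bullet> x + x \<bullet> (M *\<^sub>v x)"
      unfolding SM using M x by (simp add: add_mult_distrib_mat_vec[of _ n n] scalar_prod_add_distrib[of _ n])
    also have "x \<bullet> (M *\<^sub>v x) = (transpose_mat L *\<^sub>v x) \<bullet> (E *\<^sub>v (transpose_mat L *\<^sub>v x))"
    proof -
      have "M *\<^sub>v x = L *\<^sub>v (E *\<^sub>v (transpose_mat L *\<^sub>v x))"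
      proof -
        have LE: "L * E \<in> carrier_mat n n" using L E by simp
        have "(L * E * transpose_mat L) *\<^sub>v x = (L * E) *\<^sub>v (transpose_mat L *\<^sub>v x)"
          by (rule assoc_mult_mat_vec[OF LE LT x])
        also have "\<dots> = L *\<^sub>v (E *\<^sub>v (transpose_mat L *\<^sub>v x))"
          by (rule assoc_mult_mat_vec[OF L E], insert LT x, simp)
        finally show ?thesis unfolding M_def .
      qed
      then show ?thesis using transpose_vec_mult_scalar[of L n n "E *\<^sub>v (transpose_mat L *\<^sub>v x)" x] L E x LT
        by simp
    qed
    also have "\<dots> \<ge> 0" using Epsd[of "transpose_mat L *\<^sub>v x"] L x by simp
    moreover have "x \<bullet> x = (\<Sum>i<n. (v i)^2)" unfolding x_def
      by (simp add: scalar_prod_def atLeast0LessThan power2_eq_square)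
    ultimately show ?thesis by linarith
  qed
  from det_ge_id[OF S symS condS] have dS: "1 \<le> det S" "det S \<le> (\<Prod>i<n. S $$ (i,i))" by auto
  have "det S = det L * det (P + E) * det L"
    unfolding S_def using L P E by (simp add: det_mult[of _ n] det_transpose)
  then have detQ: "det (P + E) = det S * det P" using detP dL by (simp add: field_simps)
  have diag1: "1 \<le> S $$ (i,i)" if "i < n" for i by (rule diag_ge_one[OF condS that])
  have "ln (det (P + E)) - ln (det P) = ln (det S)"
    using detQ detPpos dS by (simp add: ln_mult)
  also have "\<dots> \<le> ln (\<Prod>i<n. S $$ (i,i))" using dS by simp
  also have "\<dots> = (\<Sum>i<n. ln (S $$ (i,i)))"
  proof (rule ln_prod)
    fix i assume "i \<in> {..<n}"
    then have "1 \<le> S $$ (i,i)" using diag1 by simp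
    then show "S $$ (i,i) \<noteq> 0" by linarith
  qed simp
  also have "\<dots> \<le> (\<Sum>i<n. M $$ (i,i))"
  proof (rule sum_mono)
    fix i assume i: "i \<in> {..<n}"
    have l: "ln (S $$ (i,i)) \<le> S $$ (i,i) - 1" by (rule ln_le_minus_one, insert diag1 i, force)
    have "S $$ (i,i) = 1 + M $$ (i,i)" unfolding SM using M i by simp
    then show "ln (S $$ (i,i)) \<le> M $$ (i,i)" using l by linarith
  qed
  also have "\<dots> = (\<Sum>j<n. \<Sum>l<n. (transpose_mat L * L) $$ (j,l) * E $$ (j,l))"
    unfolding M_def by (rule trace_congr[OF L E])
  also have "\<dots> \<le> frob_norm (transpose_mat L * L) * frob_norm E"
    by (rule frob_CS, insert L E, auto)
  also have "transpose_mat L * L = the (mat_inverse P)"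
  proof -
    have "(L * P) * transpose_mat L = 1\<^sub>m n" using LP .
    moreover have "L * P \<in> carrier_mat n n" using L P by simp
    ultimately have "transpose_mat L * (L * P) = 1\<^sub>m n"
      using mat_mult_left_right_inverse[of "L * P" n "transpose_mat L"] LT by blast
    then have inv: "transpose_mat L * L * P = 1\<^sub>m n" using L P by (simp add: assoc_mult_mat[of _ n n])
    have "P \<in> Units (ring_mat TYPE(real) n undefined)"
      by (rule det_non_zero_imp_unit[OF P], insert detPpos, simp)
    then have "mat_inverse P \<noteq> None" using mat_inverse(1)[OF P, of undefined] by auto
    then obtain B where B: "mat_inverse P = Some B" by auto
    from mat_inverse(2)[OF P B] have PB: "P * B = 1\<^sub>m n" and Bc: "B \<in> carrier_mat n n" by auto
    have "transpose_mat L * L = transpose_mat L * L * (P * B)" using L by (simp add: PB)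
    also have "\<dots> = (transpose_mat L * L * P) * B"
    proof -
      have TLc: "transpose_mat L * L \<in> carrier_mat n n" using L by simp
      show ?thesis using assoc_mult_mat[OF TLc P Bc] by simp
    qed
    also have "\<dots> = B" using inv Bc by simp
    finally show ?thesis using B by simp
  qed
  finally have "ln (det (P + E)) - ln (det P) \<le> frob_norm (the (mat_inverse P)) * frob_norm E" .
  moreover have "det P \<le> det (P + E)" using detQ dS detPpos by (simp add: mult_le_cancel_right1)
  ultimately show ?thesis using detPpos by simp
qed

lemma inverse_the:
  fixes A B :: "real mat"
  assumes A: "A \<in> carrier_mat n n" and B: "B \<in> carrier_mat n n" and AB: "A * B = 1\<^sub>m n"
  shows "the (mat_inverse A) = B"
proof -
  have BA: "B * A = 1\<^sub>m n" by (rule mat_mult_left_right_inverse[OF A B AB])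
  have "det A * det B = 1" using det_mult[OF A B] AB by simp
  then have "A \<in> Units (ring_mat TYPE(real) n undefined)"
    by (intro det_non_zero_imp_unit[OF A]) auto
  then have "mat_inverse A \<noteq> None" using mat_inverse(1)[OF A, of undefined] by auto
  then obtain C where C: "mat_inverse A = Some C" by auto
  from mat_inverse(2)[OF A C] have AC: "A * C = 1\<^sub>m n" and Cc: "C \<in> carrier_mat n n" by auto
  have "C = (B * A) * C" using BA Cc by simp
  also have "\<dots> = B * (A * C)" using A B Cc by (simp add: assoc_mult_mat[of _ n n])
  also have "\<dots> = B" using AC B by simp
  finally show ?thesis using C by simp
qed

lemma g_bounds:
  fixes G K Dinv :: "real mat"
  assumes G: "psd_mat N G" and GK: "loewner_le N G K" and K: "K \<in> carrier_mat N N"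
    and D: "Dinv \<in> carrier_mat N N" and Ds: "transpose_mat Dinv = Dinv"
    and Dpd: "\<And>v. v \<in> carrier_vec N \<Longrightarrow> v \<noteq> 0\<^sub>v N \<Longrightarrow> 0 < v \<bullet> (Dinv *\<^sub>v v)"
  shows "ln (det (G + Dinv)) \<le> ln (det (K + Dinv)) \<and>
    ln (det (K + Dinv)) - ln (det (G + Dinv)) \<le> frob_norm (the (mat_inverse (G + Dinv))) * frob_norm (K - G)"
proof -
  from G have Gc: "G \<in> carrier_mat N N" and Gs: "transpose_mat G = G"
    and Gp: "\<And>v. v \<in> carrier_vec N \<Longrightarrow> 0 \<le> v \<bullet> (G *\<^sub>v v)" unfolding psd_mat_def by auto
  from GK have Ec: "K - G \<in> carrier_mat N N" and Es: "transpose_mat (K - G) = K - G"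
    and Ep: "\<And>v. v \<in> carrier_vec N \<Longrightarrow> 0 \<le> v \<bullet> ((K - G) *\<^sub>v v)" unfolding loewner_le_def psd_mat_def by auto
  have Pc: "G + Dinv \<in> carrier_mat N N" using Gc D by simp
  have Ps: "transpose_mat (G + Dinv) = G + Dinv" using Gc D Gs Ds by (simp add: transpose_add)
  have Ppd: "0 < v \<bullet> ((G + Dinv) *\<^sub>v v)" if "v \<in> carrier_vec N" "v \<noteq> 0\<^sub>v N" for v
  proof -
    have "v \<bullet> ((G + Dinv) *\<^sub>v v) = v \<bullet> (G *\<^sub>v v) + v \<bullet> (Dinv *\<^sub>v v)"
      using Gc D that by (simp add: add_mult_distrib_mat_vec[of _ N N] scalar_prod_add_distrib[of _ N])
    then show ?thesis using Gp[OF that(1)] Dpd[OF that] by simp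
  qed
  have eq: "G + Dinv + (K - G) = K + Dinv"
    using Gc D K by (intro eq_matI) auto
  from core[OF Pc Ps Ppd Ec Es Ep] eq
  show ?thesis by auto
qed

definition Dinv' :: "nat \<Rightarrow> nat \<Rightarrow> nat \<Rightarrow> real mat" where
  "Dinv' p n n' = mat (Nsize p n n') (Nsize p n n')
     (\<lambda>(i,j). if i = j then (if i < n - p then 2 * real (n - p) else 2 * real (n' - p)) else 0)"

lemma Delta_Dinv':
  assumes "p < n" "p < n'"
  shows "Delta p n n' * Dinv' p n n' = 1\<^sub>m (Nsize p n n')"
proof (rule eq_matI)
  fix i j assume i: "i < dim_row (1\<^sub>m (Nsize p n n') :: real mat)" and j: "j < dim_col (1\<^sub>m (Nsize p n n') :: real mat)"
  let ?N = "Nsize p n n'"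
  have "(Delta p n n' * Dinv' p n n') $$ (i,j) = (\<Sum>k<?N. Delta p n n' $$ (i,k) * Dinv' p n n' $$ (k,j))"
    using i j by (simp add: Delta_def Dinv'_def scalar_prod_def atLeast0LessThan)
  also have "\<dots> = (\<Sum>k<?N. if k = i then Delta p n n' $$ (i,i) * Dinv' p n n' $$ (i,j) else 0)"
    by (rule sum.cong, simp, insert i, auto simp: Delta_def Dinv'_def)
  also have "\<dots> = 1\<^sub>m ?N $$ (i,j)"
    using i j assms by (auto simp: Delta_def Dinv'_def)
  finally show "(Delta p n n' * Dinv' p n n') $$ (i,j) = 1\<^sub>m ?N $$ (i,j)" .
qed (auto simp: Delta_def Dinv'_def)

lemma Delta_inv_eq:
  assumes "p < n" "p < n'"
  shows "Delta_inv p n n' = Dinv' p n n'"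
  unfolding Delta_inv_def
  by (rule inverse_the[OF _ _ Delta_Dinv'[OF assms]], auto simp: Delta_def Dinv'_def)

lemma Dinv'_pd:
  assumes "p < n" "p < n'" and v: "v \<in> carrier_vec (Nsize p n n')" "v \<noteq> 0\<^sub>v (Nsize p n n')"
  shows "0 < v \<bullet> (Dinv' p n n' *\<^sub>v v)"
proof -
  let ?N = "Nsize p n n'"
  define d where "d i = (if i < n - p then 2 * real (n - p) else 2 * real (n' - p))" for i
  have dpos: "0 < d i" for i using assms(1,2) by (simp add: d_def)
  have "v \<bullet> (Dinv' p n n' *\<^sub>v v) = (\<Sum>i<?N. v $ i * (\<Sum>j<?N. Dinv' p n n' $$ (i,j) * v $ j))"
    using qf_vec[of "Dinv' p n n'" ?N v] v by (simp add: Dinv'_def qf_def)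
  also have "\<dots> = (\<Sum>i<?N. d i * (v $ i)^2)"
  proof (rule sum.cong[OF refl])
    fix i assume i: "i \<in> {..<?N}"
    have "(\<Sum>j<?N. Dinv' p n n' $$ (i,j) * v $ j) = (\<Sum>j<?N. if j = i then d i * v $ i else 0)"
      by (rule sum.cong, simp, insert i, auto simp: Dinv'_def d_def)
    also have "\<dots> = d i * v $ i" using i by simp
    finally show "v $ i * (\<Sum>j<?N. Dinv' p n n' $$ (i,j) * v $ j) = d i * (v $ i)^2"
      by (simp add: power2_eq_square)
  qed
  also have "\<dots> > 0"
  proof -
    from v obtain i where i: "i < ?N" "v $ i \<noteq> 0"
      by (metis carrier_vecD eq_vecI index_zero_vec(1) index_zero_vec(2))
    have "0 < d i * (v $ i)^2" using dpos i by simp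
    also have "\<dots> \<le> (\<Sum>i<?N. d i * (v $ i)^2)"
      by (rule member_le_sum, insert i dpos, auto simp: less_imp_le)
    finally show ?thesis .
  qed
  finally show ?thesis .
qed

theorem theorem3:
  fixes p :: nat and \<alpha> :: real
    and \<kappa>1 :: "'a list \<Rightarrow> 'a list \<Rightarrow> real" and \<kappa>2 :: "'a \<Rightarrow> 'a \<Rightarrow> real"
    and x x' :: "'a list" and G1 G2 :: "real mat"
  assumes "p \<ge> 1" and "0 < \<alpha>" and "\<alpha> \<le> 1"
    and "pd_kernel {xs. length xs = p} \<kappa>1" and "pd_kernel UNIV \<kappa>2"
    and "length x > p" and "length x' > p"
  defines "n \<equiv> length x" and "n' \<equiv> length x'"
  defines "N \<equiv> Nsize p n n'"
  defines "K1 \<equiv> K1_mat p \<kappa>1 x x'" and "K2 \<equiv> K2_mat p \<kappa>2 x x'"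
  assumes "psd_mat N G1" and "psd_mat N G2"
    and "loewner_le N G1 K1" and "loewner_le N G2 (K1 + K2)"
  defines "\<epsilon>1 \<equiv> K1 - G1" and "\<epsilon>2 \<equiv> K1 + K2 - G2"
  defines "\<rho> \<equiv> exp ((1 - \<alpha>) * frob_norm (grad_g p n n' G1) * frob_norm \<epsilon>1
                   + \<alpha> * frob_norm (grad_g p n n' G2) * frob_norm \<epsilon>2) - 1"
  shows "exp (- phi_kernel p \<alpha> \<kappa>1 \<kappa>2 x x') \<le> exp (- C_const p n n' - f_fun p n n' \<alpha> G1 G2)
       \<and> exp (- C_const p n n' - f_fun p n n' \<alpha> G1 G2) \<le> (1 + \<rho>) * exp (- phi_kernel p \<alpha> \<kappa>1 \<kappa>2 x x')"
proof -
  have pn: "p < n" "p < n'" using assms(6,7) unfolding n_def n'_def by auto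
  have Dc: "Delta_inv p n n' \<in> carrier_mat N N"
    unfolding Delta_inv_eq[OF pn] N_def Dinv'_def by simp
  have Ds: "transpose_mat (Delta_inv p n n') = Delta_inv p n n'"
    unfolding Delta_inv_eq[OF pn] Dinv'_def by (intro eq_matI) auto
  have Dpd: "\<And>v. v \<in> carrier_vec N \<Longrightarrow> v \<noteq> 0\<^sub>v N \<Longrightarrow> 0 < v \<bullet> (Delta_inv p n n' *\<^sub>v v)"
    unfolding Delta_inv_eq[OF pn] N_def using Dinv'_pd[OF pn] by blast
  have Neq: "N = (n - p) + (n' - p)" unfolding N_def Nsize_def using pn by simp
  have K1c: "K1 \<in> carrier_mat N N"
    unfolding K1_def K1_mat_def gram_def windows_def Neq n_def n'_def carrier_mat_def by simp
  have K2c: "K2 \<in> carrier_mat N N"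
    unfolding K2_def K2_mat_def gram_def targets_def Neq n_def n'_def carrier_mat_def by simp
  have K12c: "K1 + K2 \<in> carrier_mat N N" using K1c K2c by simp
  note b1 = g_bounds[OF \<open>psd_mat N G1\<close> \<open>loewner_le N G1 K1\<close> K1c Dc Ds Dpd]
  note b2 = g_bounds[OF \<open>psd_mat N G2\<close> \<open>loewner_le N G2 (K1 + K2)\<close> K12c Dc Ds Dpd]
  define a where "a = g_fun p n n' G1"
  define A where "A = g_fun p n n' K1"
  define b where "b = g_fun p n n' G2"
  define B where "B = g_fun p n n' (K1 + K2)"
  define u where "u = frob_norm (grad_g p n n' G1) * frob_norm \<epsilon>1"
  define w where "w = frob_norm (grad_g p n n' G2) * frob_norm \<epsilon>2"
  have h1: "a \<le> A" "A - a \<le> u" using b1 unfolding a_def A_def u_def g_fun_def grad_g_def \<epsilon>1_def by auto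
  have h2: "b \<le> B" "B - b \<le> w" using b2 unfolding b_def B_def w_def g_fun_def grad_g_def \<epsilon>2_def by auto
  have phi: "phi_kernel p \<alpha> \<kappa>1 \<kappa>2 x x' = C_const p n n' + ((1 - \<alpha>) * A + \<alpha> * B)"
    unfolding phi_kernel_def Let_def f_fun_def A_def B_def K1_def K2_def n_def n'_def by simp
  have f: "f_fun p n n' \<alpha> G1 G2 = (1 - \<alpha>) * a + \<alpha> * b" unfolding f_fun_def a_def b_def by simp
  have rho: "1 + \<rho> = exp ((1 - \<alpha>) * u + \<alpha> * w)" unfolding \<rho>_def u_def w_def by (simp add: mult.assoc)
  have al: "0 \<le> 1 - \<alpha>" "0 \<le> \<alpha>" using assms(2,3) by auto
  have "(1 - \<alpha>) * a \<le> (1 - \<alpha>) * A" using h1 al by (simp add: mult_left_mono)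
  moreover have "\<alpha> * b \<le> \<alpha> * B" using h2 al by (simp add: mult_left_mono)
  ultimately have part1: "- phi_kernel p \<alpha> \<kappa>1 \<kappa>2 x x' \<le> - C_const p n n' - f_fun p n n' \<alpha> G1 G2"
    unfolding phi f by linarith
  have "(1 - \<alpha>) * (A - a) \<le> (1 - \<alpha>) * u" using h1 al by (simp add: mult_left_mono)
  moreover have "\<alpha> * (B - b) \<le> \<alpha> * w" using h2 al by (simp add: mult_left_mono)
  ultimately have "- C_const p n n' - f_fun p n n' \<alpha> G1 G2 \<le> - phi_kernel p \<alpha> \<kappa>1 \<kappa>2 x x' + ((1 - \<alpha>) * u + \<alpha> * w)"
    unfolding phi f by (simp add: algebra_simps)
  then have "exp (- C_const p n n' - f_fun p n n' \<alpha> G1 G2) \<le> exp (- phi_kernel p \<alpha> \<kappa>1 \<kappa>2 x x' + ((1 - \<alpha>) * u + \<alpha> * w))"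
    by simp
  also have "\<dots> = (1 + \<rho>) * exp (- phi_kernel p \<alpha> \<kappa>1 \<kappa>2 x x')" unfolding rho by (simp only: exp_add[symmetric] mult.commute)
  finally have e2: "exp (- C_const p n n' - f_fun p n n' \<alpha> G1 G2) \<le> (1 + \<rho>) * exp (- phi_kernel p \<alpha> \<kappa>1 \<kappa>2 x x')" .
  have e1: "exp (- phi_kernel p \<alpha> \<kappa>1 \<kappa>2 x x') \<le> exp (- C_const p n n' - f_fun p n n' \<alpha> G1 G2)"
    using part1 by (simp only: exp_le_cancel_iff)
  show ?thesis by (rule conjI[OF e1 e2])
qed

end
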